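(* Let $u:\mathbb{R}_{\ge 0}\to[0,1]$ be non-increasing with $u(0)=1$ and $\lim_{t\to\infty}u(t)=0$. Let there be $n$ algorithms with runtime CDFs $F_1,\dots,F_n$, expected utilities $U_i=\int_0^\infty u(t)\,dF_i(t)$, let $i^{opt}\in\arg\max_i U_i$ and $\Delta_i=U_{i^{opt}}-U_i$. For captimes $\kappa_1,\dots,\kappa_n>0$ let $LB_i=\int_0^{\kappa_i}u(t)\,dF_i(t)$, $UB_i=LB_i+u(\kappa_i)(1-F_i(\kappa_i))$, and $i^*\in\arg\max_i LB_i$. Let $\epsilon>0$. If $$u(\kappa_i)\big(1-F_i(\kappa_i)\big)\le\Delta_i+\frac{\epsilon}{2}\quad\text{for all algorithms } i,$$ then the skeptic is convinced that both $i^{opt}$ and $i^*$ are $\epsilon$-optimal, i.e., $LB_{i^{opt}}\ge UB_i-\epsilon$ for all $i\ne i^{opt}$ and $LB_{i^*}\ge UB_i-\epsilon$ for all $i\neq i^*$.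
   Context: An algorithm $j$ is $\epsilon$-optimal if $U_j\ge\max_i U_i-\epsilon$. In the prover–skeptic setting, the skeptic sees each CDF $F_i$ only on $[0,\kappa_i]$ and is "convinced that $j$ is $\epsilon$-optimal" exactly when $LB_j\ge UB_i-\epsilon$ for all $i\neq j$; this condition implies that $j$ is $\epsilon$-optimal. *)

theory Defs
  imports "HOL-Analysis.Analysis" "HOL-Probability.Probability"
begin

text \<open>Runtime distribution of an algorithm: a probability measure on the Borel reals
  supported on the nonnegative reals; its CDF is F(t) = measure M {..t}.\<close>

definition cdf_of :: "real measure \<Rightarrow> real \<Rightarrow> real" where
  "cdf_of M t = measure M {..t}"

definition exp_util :: "(real \<Rightarrow> real) \<Rightarrow> real measure \<Rightarrow> real" where
  "exp_util u M = (LINT t:{0..}|M. u t)"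

definition lower_bound :: "(real \<Rightarrow> real) \<Rightarrow> real measure \<Rightarrow> real \<Rightarrow> real" where
  "lower_bound u M \<kappa> = (LINT t:{0..\<kappa>}|M. u t)"

definition upper_bound :: "(real \<Rightarrow> real) \<Rightarrow> real measure \<Rightarrow> real \<Rightarrow> real" where
  "upper_bound u M \<kappa> = lower_bound u M \<kappa> + u \<kappa> * (1 - cdf_of M \<kappa>)"

text \<open>The skeptic (seeing each F_i only on [0,kappa_i]) is convinced that j is
  eps-optimal among the algorithms in I.\<close>
definition convinced_eps_optimal ::
  "(real \<Rightarrow> real) \<Rightarrow> 'i set \<Rightarrow> ('i \<Rightarrow> real measure) \<Rightarrow> ('i \<Rightarrow> real) \<Rightarrow> real \<Rightarrow> 'i \<Rightarrow> bool" where
  "convinced_eps_optimal u I M \<kappa> \<epsilon> j \<longleftrightarrow>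
     (\<forall>i\<in>I. i \<noteq> j \<longrightarrow> lower_bound u (M j) (\<kappa> j) \<ge> upper_bound u (M i) (\<kappa> i) - \<epsilon>)"

end

theory Submission
  imports Defs
begin

lemma split_lemma:
  fixes u :: "real \<Rightarrow> real" and N :: "real measure" and k :: real
  assumes u_mono: "antimono_on {0..} u"
    and u_range: "\<And>t. t \<ge> 0 \<Longrightarrow> u t \<in> {0..1}"
    and P: "prob_space N" and S: "sets N = sets borel" and k: "k > 0"
  shows "lower_bound u N k \<le> exp_util u N \<and>
         exp_util u N \<le> lower_bound u N k + u k * (1 - cdf_of N k)"
proof -
  interpret prob_space N by (rule P)
  define v where "v t = u (max 0 t)" for t
  have mono: "mono (\<lambda>t. - v t)"
    unfolding mono_def v_def using u_mono
    by (auto simp: monotone_on_def intro!: le_imp_neg_le)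
  have "(\<lambda>t. - v t) \<in> borel_measurable borel" by (rule borel_measurable_mono[OF mono])
  hence "(\<lambda>t. - (- v t)) \<in> borel_measurable borel" by measurable
  hence vm: "v \<in> borel_measurable N" using S measurable_cong_sets by auto
  have vb: "\<And>t. v t \<in> {0..1}" unfolding v_def using u_range by auto
  have vi: "integrable N v"
    by (rule integrable_const_bound[where B=1]) (use vb vm in auto)
  have si: "set_integrable N A v" if "A \<in> sets N" for A
    unfolding set_integrable_def using that vi vm
    by (intro integrable_mult_indicator) auto
  have ci: "set_integrable N A (\<lambda>_. v k)" if "A \<in> sets N" for A
    unfolding set_integrable_def using that
    by (intro integrable_mult_indicator) auto
  have sets: "{0..k} \<in> sets N" "{k<..} \<in> sets N" "{0..} \<in> sets N" "{..k} \<in> sets N"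
    using S by auto
  have E: "exp_util u N = (LINT t:{0..}|N. v t)"
    unfolding exp_util_def v_def by (rule set_lebesgue_integral_cong) (use sets in auto)
  have L: "lower_bound u N k = (LINT t:{0..k}|N. v t)"
    unfolding lower_bound_def v_def by (rule set_lebesgue_integral_cong) (use sets in auto)
  have un: "{0..} = ({0..k} \<union> {k<..}::real set)" using k by auto
  have E2: "(LINT t:{0..}|N. v t) = (LINT t:{0..k}|N. v t) + (LINT t:{k<..}|N. v t)"
    unfolding un by (rule set_integral_Un) (use sets si in auto)
  have nn: "(LINT t:{k<..}|N. v t) \<ge> 0"
    unfolding set_lebesgue_integral_def using vb
    by (intro integral_nonneg_AE) (auto simp: indicator_def)
  have le: "(LINT t:{k<..}|N. v t) \<le> (LINT t:{k<..}|N. v k)"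
  proof (rule set_integral_mono)
    show "set_integrable N {k<..} v" using si sets by auto
    show "set_integrable N {k<..} (\<lambda>_. v k)" using ci sets by auto
    fix x :: real assume "x \<in> {k<..}"
    then show "v x \<le> v k" unfolding v_def using u_mono k
      by (auto simp: monotone_on_def)
  qed
  have c: "(LINT t:{k<..}|N. v k) = v k * measure N {k<..}"
    using sets_eq_imp_space_eq[OF S] by (simp add: set_lebesgue_integral_def mult.commute)
  have "measure N {k<..} = 1 - measure N {..k}"
  proof -
    have "space N - {..k} = {k<..}" using S sets_eq_imp_space_eq by fastforce
    thus ?thesis using prob_compl[OF sets(4)] by simp
  qed
  moreover have "v k = u k" unfolding v_def using k by simp
  ultimately show ?thesis using E L E2 nn le c unfolding cdf_of_def by auto
qed

theorem lemma6:
  fixes u :: "real \<Rightarrow> real"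
    and n :: nat
    and M :: "nat \<Rightarrow> real measure"
    and \<kappa> :: "nat \<Rightarrow> real"
    and iopt istar :: nat
    and \<epsilon> :: real
  assumes u_mono: "antimono_on {0..} u"
    and u_range: "\<And>t. t \<ge> 0 \<Longrightarrow> u t \<in> {0..1}"
    and u_zero: "u 0 = 1"
    and u_lim: "(u \<longlongrightarrow> 0) at_top"
    and M_prob: "\<And>i. i < n \<Longrightarrow> prob_space (M i)"
    and M_borel: "\<And>i. i < n \<Longrightarrow> sets (M i) = sets borel"
    and M_nonneg: "\<And>i. i < n \<Longrightarrow> AE t in M i. t \<ge> 0"
    and iopt: "iopt < n" "\<And>i. i < n \<Longrightarrow> exp_util u (M i) \<le> exp_util u (M iopt)"
    and \<kappa>_pos: "\<And>i. i < n \<Longrightarrow> \<kappa> i > 0"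
    and istar: "istar < n"
      "\<And>i. i < n \<Longrightarrow> lower_bound u (M i) (\<kappa> i) \<le> lower_bound u (M istar) (\<kappa> istar)"
    and \<epsilon>_pos: "\<epsilon> > 0"
    and hyp: "\<And>i. i < n \<Longrightarrow> u (\<kappa> i) * (1 - cdf_of (M i) (\<kappa> i))
                 \<le> (exp_util u (M iopt) - exp_util u (M i)) + \<epsilon> / 2"
  shows "convinced_eps_optimal u {..<n} M \<kappa> \<epsilon> iopt
       \<and> convinced_eps_optimal u {..<n} M \<kappa> \<epsilon> istar"
proof -
  have S: "\<And>i. i < n \<Longrightarrow> lower_bound u (M i) (\<kappa> i) \<le> exp_util u (M i) \<and>
         exp_util u (M i) \<le> lower_bound u (M i) (\<kappa> i) + u (\<kappa> i) * (1 - cdf_of (M i) (\<kappa> i))"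
    by (rule split_lemma[OF u_mono u_range M_prob M_borel \<kappa>_pos])
  have opt: "lower_bound u (M iopt) (\<kappa> iopt) \<ge> exp_util u (M iopt) - \<epsilon>/2"
    using S[OF iopt(1)] hyp[OF iopt(1)] by linarith
  have ub: "upper_bound u (M i) (\<kappa> i) \<le> exp_util u (M iopt) + \<epsilon>/2" if "i < n" for i
    using S[OF that] hyp[OF that] unfolding upper_bound_def by linarith
  show ?thesis
    unfolding convinced_eps_optimal_def
    using opt ub istar(2)[OF iopt(1)] by fastforce
qed

end
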